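(* Let $R$ be any nonempty set of reward functions $r':\mathcal{S}\times\mathcal{A}\to\mathbb{R}$. Then there exists a (time-indexed) reward function $r=(r_t)_{t=1}^T$ with $r_t:\mathcal{S}\times\mathcal{A}\to[-\infty,\infty)$ such that $$\arg\max_{\pi\in\Pi}J(\pi,r)\subseteq\arg\max_{\pi\in\Pi}\ \inf_{r'\in R}\mathbb{E}_\pi\Big[\sum_{t=1}^T r'(s_t,a_t)\Big].$$
   Context: Finite-horizon MDP: finite state set $\mathcal{S}$, finite action set $\mathcal{A}$, horizon $T\ge1$, initial distribution $p_1$, transition kernel $p(s'\mid s,a)$. $\Pi$ is the set of Markov (possibly time-dependent) policies $\pi=(\pi_t(\cdot\mid s))_{t=1}^T$, with $\pi(a_t\mid s_t)$ meaning $\pi_t(a_t\mid s_t)$; $\mathbb{E}_\pi$ is expectation over trajectories generated by $\pi$. For a time-indexed reward $r$ (values $-\infty$ allowed), the MaxEnt RL objective is $J(\pi,r)=\mathbb{E}_\pi[\sum_{t=1}^T r_t(s_t,a_t)]+\mathcal{H}_\pi[a\mid s]$ with $\mathcal{H}_\pi[a\mid s]=\mathbb{E}_\pi[-\sum_{t=1}^T\log\pi(a_t\mid s_t)]$ ($0\log0=0$). *)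

theory Defs
  imports "HOL-Analysis.Analysis" "HOL-Library.Extended_Real"
begin

text \<open>Finite-horizon MDP with finite state type 's and finite action type 'a.
  Time steps are 1..T. A trajectory is a function t \<mapsto> (s_t, a_t) on {1..T}
  (extensional, default value undefined outside). A Markov policy is
  pi t s a = pi_t(a | s).\<close>

definition traj :: "nat \<Rightarrow> (nat \<Rightarrow> 's \<times> 'a) set" where
  "traj T = PiE {1..T} (\<lambda>_. UNIV)"

definition policies :: "nat \<Rightarrow> (nat \<Rightarrow> 's \<Rightarrow> 'a::finite \<Rightarrow> real) set" where
  "policies T = {\<pi>. \<forall>t\<in>{1..T}. \<forall>s. (\<forall>a. 0 \<le> \<pi> t s a) \<and> (\<Sum>a\<in>UNIV. \<pi> t s a) = 1}"

definition traj_prob ::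
  "('s \<Rightarrow> real) \<Rightarrow> ('s \<Rightarrow> 'a \<Rightarrow> 's \<Rightarrow> real) \<Rightarrow> nat \<Rightarrow> (nat \<Rightarrow> 's \<Rightarrow> 'a \<Rightarrow> real)
     \<Rightarrow> (nat \<Rightarrow> 's \<times> 'a) \<Rightarrow> real" where
  "traj_prob p1 p T \<pi> \<tau> =
     p1 (fst (\<tau> 1))
     * (\<Prod>t\<in>{1..T}. \<pi> t (fst (\<tau> t)) (snd (\<tau> t)))
     * (\<Prod>t\<in>{2..T}. p (fst (\<tau> (t - 1))) (snd (\<tau> (t - 1))) (fst (\<tau> t)))"

text \<open>E_pi[sum_t r_t(s_t,a_t)] for a time-indexed extended-real reward (0 * -inf = 0).\<close>
definition exp_return ::
  "('s \<Rightarrow> real) \<Rightarrow> ('s \<Rightarrow> 'a \<Rightarrow> 's \<Rightarrow> real) \<Rightarrow> nat \<Rightarrow> (nat \<Rightarrow> 's \<Rightarrow> 'a \<Rightarrow> real)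
     \<Rightarrow> (nat \<Rightarrow> 's \<Rightarrow> 'a \<Rightarrow> ereal) \<Rightarrow> ereal" where
  "exp_return p1 p T \<pi> r =
     (\<Sum>\<tau>\<in>traj T. ereal (traj_prob p1 p T \<pi> \<tau>) * (\<Sum>t\<in>{1..T}. r t (fst (\<tau> t)) (snd (\<tau> t))))"

text \<open>Causal entropy H_pi[a|s] = E_pi[- sum_t log pi_t(a_t|s_t)]; trajectories of
  probability zero contribute 0 (so 0 log 0 = 0).\<close>
definition causal_entropy ::
  "('s \<Rightarrow> real) \<Rightarrow> ('s \<Rightarrow> 'a \<Rightarrow> 's \<Rightarrow> real) \<Rightarrow> nat \<Rightarrow> (nat \<Rightarrow> 's \<Rightarrow> 'a \<Rightarrow> real) \<Rightarrow> real" where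
  "causal_entropy p1 p T \<pi> =
     (\<Sum>\<tau>\<in>traj T. traj_prob p1 p T \<pi> \<tau> * (\<Sum>t\<in>{1..T}. - ln (\<pi> t (fst (\<tau> t)) (snd (\<tau> t)))))"

definition maxent_J ::
  "('s \<Rightarrow> real) \<Rightarrow> ('s \<Rightarrow> 'a \<Rightarrow> 's \<Rightarrow> real) \<Rightarrow> nat \<Rightarrow> (nat \<Rightarrow> 's \<Rightarrow> 'a \<Rightarrow> real)
     \<Rightarrow> (nat \<Rightarrow> 's \<Rightarrow> 'a \<Rightarrow> ereal) \<Rightarrow> ereal" where
  "maxent_J p1 p T \<pi> r = exp_return p1 p T \<pi> r + ereal (causal_entropy p1 p T \<pi>)"

definition robust_obj ::
  "('s \<Rightarrow> real) \<Rightarrow> ('s \<Rightarrow> 'a \<Rightarrow> 's \<Rightarrow> real) \<Rightarrow> nat \<Rightarrow> ('s \<Rightarrow> 'a \<Rightarrow> real) set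
     \<Rightarrow> (nat \<Rightarrow> 's \<Rightarrow> 'a \<Rightarrow> real) \<Rightarrow> ereal" where
  "robust_obj p1 p T R \<pi> =
     (INF r'\<in>R. ereal (\<Sum>\<tau>\<in>traj T. traj_prob p1 p T \<pi> \<tau> * (\<Sum>t\<in>{1..T}. r' (fst (\<tau> t)) (snd (\<tau> t)))))"

definition argmax_set :: "'x set \<Rightarrow> ('x \<Rightarrow> ereal) \<Rightarrow> 'x set" where
  "argmax_set A f = {x\<in>A. \<forall>y\<in>A. f y \<le> f x}"

end

theory Submission
  imports Defs
begin



lemma finite_traj: "finite (traj T :: (nat \<Rightarrow> 's::finite \<times> 'a::finite) set)"
  unfolding traj_def by (intro finite_PiE) auto

lemma traj_Suc_sum:
  fixes f :: "(nat \<Rightarrow> 's::finite \<times> 'a::finite) \<Rightarrow> real"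
  shows "(\<Sum>\<tau>\<in>traj (Suc n). f \<tau>) = (\<Sum>\<tau>\<in>traj n. \<Sum>x\<in>UNIV. f (\<tau>(Suc n := x)))"
proof -
  have e: "{1..Suc n} = insert (Suc n) {1..n}" by auto
  have "(\<Sum>\<tau>\<in>traj (Suc n). f \<tau>) = (\<Sum>(x,\<tau>)\<in>UNIV \<times> traj n. f (\<tau>(Suc n := x)))"
    unfolding traj_def e
    by (intro sum.reindex_bij_witness[of _ "\<lambda>(y,g). g(Suc n := y)" "\<lambda>g. (g (Suc n), g(Suc n := undefined))"])
       (auto simp: PiE_def extensional_def)
  also have "\<dots> = (\<Sum>x\<in>UNIV. \<Sum>\<tau>\<in>traj n. f (\<tau>(Suc n := x)))"
    by (subst sum.cartesian_product) auto
  also have "\<dots> = (\<Sum>\<tau>\<in>traj n. \<Sum>x\<in>UNIV. f (\<tau>(Suc n := x)))"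
    by (rule sum.swap)
  finally show ?thesis .
qed

lemma traj_prob_upd:
  assumes "1 \<le> n"
  shows "traj_prob p1 p (Suc n) \<pi> (\<tau>(Suc n := x)) =
     traj_prob p1 p n \<pi> \<tau> * \<pi> (Suc n) (fst x) (snd x) * p (fst (\<tau> n)) (snd (\<tau> n)) (fst x)"
proof -
  have a: "(\<Prod>t\<in>{1..n}. \<pi> t (fst ((\<tau>(Suc n := x)) t)) (snd ((\<tau>(Suc n := x)) t)))
        = (\<Prod>t\<in>{1..n}. \<pi> t (fst (\<tau> t)) (snd (\<tau> t)))"
    by (intro prod.cong) auto
  have b: "(\<Prod>t\<in>{2..n}. p (fst ((\<tau>(Suc n := x)) (t - 1))) (snd ((\<tau>(Suc n := x)) (t - 1))) (fst ((\<tau>(Suc n := x)) t)))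
        = (\<Prod>t\<in>{2..n}. p (fst (\<tau> (t - 1))) (snd (\<tau> (t - 1))) (fst (\<tau> t)))"
    by (intro prod.cong) auto
  have a': "(\<Prod>t\<in>{1..Suc n}. \<pi> t (fst ((\<tau>(Suc n := x)) t)) (snd ((\<tau>(Suc n := x)) t)))
     = (\<Prod>t\<in>{1..n}. \<pi> t (fst (\<tau> t)) (snd (\<tau> t))) * \<pi> (Suc n) (fst x) (snd x)"
    by (subst prod.cl_ivl_Suc) (simp only: a, simp)
  have b': "(\<Prod>t\<in>{2..Suc n}. p (fst ((\<tau>(Suc n := x)) (t - 1))) (snd ((\<tau>(Suc n := x)) (t - 1))) (fst ((\<tau>(Suc n := x)) t)))
     = (\<Prod>t\<in>{2..n}. p (fst (\<tau> (t - 1))) (snd (\<tau> (t - 1))) (fst (\<tau> t))) * p (fst (\<tau> n)) (snd (\<tau> n)) (fst x)"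
    using assms by (subst prod.cl_ivl_Suc) (simp only: b, simp)
  show ?thesis
    unfolding traj_prob_def a' b' using assms
    by simp
qed

lemma traj_prob_nonneg:
  assumes "\<forall>s. 0 \<le> p1 s" "\<forall>s a s'. 0 \<le> p s a s'" "\<pi> \<in> policies T"
  shows "0 \<le> traj_prob p1 p T \<pi> \<tau>"
  using assms unfolding traj_prob_def policies_def
  by (intro mult_nonneg_nonneg prod_nonneg) auto

lemma traj_prob_sum:
  fixes p1 :: "'s::finite \<Rightarrow> real" and p :: "'s \<Rightarrow> 'a::finite \<Rightarrow> 's \<Rightarrow> real"
  assumes "(\<Sum>s\<in>UNIV. p1 s) = 1"
    and "\<forall>s a. (\<Sum>s'\<in>UNIV. p s a s') = 1"
    and "\<pi> \<in> policies T" and "1 \<le> n" "n \<le> T"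
  shows "(\<Sum>\<tau>\<in>traj n. traj_prob p1 p n \<pi> \<tau>) = 1"
  using assms(4,5)
proof (induction n rule: nat_induct_at_least)
  case base
  have w: "\<tau> = (\<lambda>t. if t = 1 then \<tau> 1 else undefined)" if "\<tau> \<in> traj 1" for \<tau> :: "nat \<Rightarrow> 's \<times> 'a"
    using that by (auto simp: traj_def PiE_def extensional_def)
  have e: "traj 1 = (\<lambda>x. (\<lambda>t. if t = 1 then x else undefined)) ` (UNIV :: ('s \<times> 'a) set)"
  proof
    show "traj 1 \<subseteq> (\<lambda>x. (\<lambda>t. if t = 1 then x else undefined)) ` (UNIV :: ('s \<times> 'a) set)"
      using w by blast
  qed (auto simp: traj_def PiE_def extensional_def)
  have inj: "inj (\<lambda>x. (\<lambda>t. if t = (1::nat) then x else undefined) :: nat \<Rightarrow> 's \<times> 'a)"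
    by (auto simp: inj_def dest: fun_cong[where x=1])
  have "(\<Sum>\<tau>\<in>traj 1. traj_prob p1 p 1 \<pi> \<tau>) = (\<Sum>x\<in>UNIV. p1 (fst x) * \<pi> 1 (fst x) (snd x))"
    unfolding e by (subst sum.reindex[OF inj]) (simp add: traj_prob_def)
  also have "\<dots> = (\<Sum>s\<in>UNIV. \<Sum>a\<in>UNIV. p1 s * \<pi> 1 s a)"
    by (simp add: sum.cartesian_product split_def)
  also have "\<dots> = (\<Sum>s\<in>UNIV. p1 s)"
    using assms(3) base unfolding policies_def by (simp add: sum_distrib_left[symmetric])
  finally show ?case using assms(1) by simp
next
  case (Suc n)
  have "(\<Sum>\<tau>\<in>traj (Suc n). traj_prob p1 p (Suc n) \<pi> \<tau>)
      = (\<Sum>\<tau>\<in>traj n. \<Sum>x\<in>UNIV. traj_prob p1 p n \<pi> \<tau> * \<pi> (Suc n) (fst x) (snd x) * p (fst (\<tau> n)) (snd (\<tau> n)) (fst x))"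
    by (simp only: traj_Suc_sum traj_prob_upd[OF \<open>1 \<le> n\<close>])
  also have "\<dots> = (\<Sum>\<tau>\<in>traj n. traj_prob p1 p n \<pi> \<tau>)"
  proof (intro sum.cong refl)
    fix \<tau> :: "nat \<Rightarrow> 's \<times> 'a"
    have "(\<Sum>x\<in>UNIV. traj_prob p1 p n \<pi> \<tau> * \<pi> (Suc n) (fst x) (snd x) * p (fst (\<tau> n)) (snd (\<tau> n)) (fst x))
       = (\<Sum>s\<in>UNIV. \<Sum>a\<in>UNIV. traj_prob p1 p n \<pi> \<tau> * \<pi> (Suc n) s a * p (fst (\<tau> n)) (snd (\<tau> n)) s)"
      by (simp add: sum.cartesian_product split_def)
    also have "\<dots> = (\<Sum>s\<in>UNIV. traj_prob p1 p n \<pi> \<tau> * p (fst (\<tau> n)) (snd (\<tau> n)) s * (\<Sum>a\<in>UNIV. \<pi> (Suc n) s a))"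
      by (simp add: sum_distrib_left sum_distrib_right mult_ac)
    also have "\<dots> = (\<Sum>s\<in>UNIV. traj_prob p1 p n \<pi> \<tau> * p (fst (\<tau> n)) (snd (\<tau> n)) s)"
      using assms(3) Suc.prems unfolding policies_def by simp
    also have "\<dots> = traj_prob p1 p n \<pi> \<tau>"
      using assms(2) by (simp add: sum_distrib_left[symmetric])
    finally show "(\<Sum>x\<in>UNIV. traj_prob p1 p n \<pi> \<tau> * \<pi> (Suc n) (fst x) (snd x) * p (fst (\<tau> n)) (snd (\<tau> n)) (fst x)) = traj_prob p1 p n \<pi> \<tau>" .
  qed
  also have "\<dots> = 1" using Suc by simp
  finally show ?case .
qed



lemma compact_PiE_UNIV:
  fixes S :: "'b::topological_space set"
  assumes "compact S"
  shows "compact (PiE (UNIV::'i set) (\<lambda>_. S))"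
proof -
  have "compactin (product_topology (\<lambda>_. euclidean) (UNIV::'i set)) (PiE UNIV (\<lambda>_. S))"
    using assms by (simp add: compactin_PiE)
  then show ?thesis by (simp add: euclidean_product_topology)
qed

lemma cont_coord [continuous_intros]:
  "continuous_on S (\<lambda>\<pi>::nat \<Rightarrow> 's \<Rightarrow> 'a \<Rightarrow> real. \<pi> t s a)"
  by (rule continuous_on_subset[OF _ subset_UNIV], rule continuous_on_product_then_coordinatewise,
      rule continuous_on_product_then_coordinatewise, rule continuous_on_product_coordinates)

lemma cont_ret:
  "continuous_on S (\<lambda>\<pi>. (\<Sum>\<tau>\<in>traj T. traj_prob p1 p T \<pi> \<tau> * c \<tau>))"
  unfolding traj_prob_def by (intro continuous_intros)

lemma traj_prob_cong:
  assumes "\<And>t. t \<in> {1..T} \<Longrightarrow> \<pi> t = \<pi>' t"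
  shows "traj_prob p1 p T \<pi> \<tau> = traj_prob p1 p T \<pi>' \<tau>"
  unfolding traj_prob_def using assms by (intro arg_cong2[where f="(*)"] refl prod.cong) auto

lemma robust_max_exists:
  fixes p1 :: "'s::finite \<Rightarrow> real" and p :: "'s \<Rightarrow> 'a::finite \<Rightarrow> 's \<Rightarrow> real"
  shows "\<exists>\<pi>s\<in>policies T. \<forall>\<pi>\<in>policies T. robust_obj p1 p T R \<pi> \<le> robust_obj p1 p T R \<pi>s"
proof -
  define f where "f = robust_obj p1 p T R"
  define K where "K = {\<pi>::nat \<Rightarrow> 's \<Rightarrow> 'a \<Rightarrow> real. \<forall>t s a. 0 \<le> \<pi> t s a \<and> \<pi> t s a \<le> 1} \<inter> policies T"
  have box: "{\<pi>::nat \<Rightarrow> 's \<Rightarrow> 'a \<Rightarrow> real. \<forall>t s a. 0 \<le> \<pi> t s a \<and> \<pi> t s a \<le> 1}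
      = PiE UNIV (\<lambda>_. PiE UNIV (\<lambda>_. PiE UNIV (\<lambda>_. {0..1})))"
    by (auto simp: PiE_UNIV_domain Pi_iff)
  have cb: "compact {\<pi>::nat \<Rightarrow> 's \<Rightarrow> 'a \<Rightarrow> real. \<forall>t s a. 0 \<le> \<pi> t s a \<and> \<pi> t s a \<le> 1}"
    unfolding box by (intro compact_PiE_UNIV) simp
  have pol: "policies T = (\<Inter>t\<in>{1..T}. \<Inter>s. ((\<Inter>a. {\<pi>::nat \<Rightarrow> 's \<Rightarrow> 'a \<Rightarrow> real. 0 \<le> \<pi> t s a})
        \<inter> {\<pi>. (\<Sum>a\<in>UNIV. \<pi> t s a) = 1}))"
    unfolding policies_def by auto
  have "closed (policies T :: (nat \<Rightarrow> 's \<Rightarrow> 'a \<Rightarrow> real) set)"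
    unfolding pol
    by (intro closed_INT ballI closed_Int closed_Collect_le closed_Collect_eq continuous_intros)
  with cb have cK: "compact K" unfolding K_def by blast
  define u where "u = (\<lambda>(t::nat) (s::'s) (a::'a). 1 / real CARD('a))"
  have uK: "u \<in> K"
    unfolding K_def policies_def u_def by auto
  define clip where "clip = (\<lambda>\<pi>::nat \<Rightarrow> 's \<Rightarrow> 'a \<Rightarrow> real. \<lambda>t. if t \<in> {1..T} then \<pi> t else (\<lambda>s a. 0))"
  have clipK: "clip \<pi> \<in> K" if "\<pi> \<in> policies T" for \<pi>
  proof -
    have "\<pi> t s a \<le> 1" if "t \<in> {1..T}" for t s a
    proof -
      have "\<pi> t s a \<le> (\<Sum>a\<in>UNIV. \<pi> t s a)"
        using \<open>\<pi> \<in> policies T\<close> that unfolding policies_def by (intro member_le_sum) auto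
      then show ?thesis using \<open>\<pi> \<in> policies T\<close> that unfolding policies_def by auto
    qed
    then show ?thesis using that unfolding K_def policies_def clip_def by auto
  qed
  have fclip: "f (clip \<pi>) = f \<pi>" for \<pi>
  proof -
    have "traj_prob p1 p T (clip \<pi>) \<tau> = traj_prob p1 p T \<pi> \<tau>" for \<tau>
      by (rule traj_prob_cong) (simp add: clip_def)
    then show ?thesis unfolding f_def robust_obj_def by simp
  qed
  define S where "S = (SUP \<pi>\<in>K. f \<pi>)"
  define C where "C = (\<lambda>c::ereal. \<Inter>r'\<in>R. {\<pi>::nat \<Rightarrow> 's \<Rightarrow> 'a \<Rightarrow> real. c \<le> ereal (\<Sum>\<tau>\<in>traj T. traj_prob p1 p T \<pi> \<tau> * (\<Sum>t\<in>{1..T}. r' (fst (\<tau> t)) (snd (\<tau> t))))})"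
  have Cf: "\<pi> \<in> C c \<longleftrightarrow> c \<le> f \<pi>" for \<pi> c
    unfolding C_def f_def robust_obj_def by (auto simp: le_INF_iff)
  have "K \<inter> (\<Inter>c\<in>{c. c < S}. C c) \<noteq> {}"
  proof (rule compact_imp_fip_image[OF cK])
    fix c assume "c \<in> {c. c < S}"
    show "closed (C c)"
      unfolding C_def
      by (intro closed_INT ballI closed_Collect_le continuous_intros cont_ret)
  next
    fix I' assume I': "finite I'" "I' \<subseteq> {c. c < S}"
    show "K \<inter> (\<Inter>c\<in>I'. C c) \<noteq> {}"
    proof (cases "I' = {}")
      case True then show ?thesis using uK by auto
    next
      case False
      have "Max I' < S" using I' False by auto
      then obtain \<pi> where "\<pi> \<in> K" "Max I' < f \<pi>" unfolding S_def by (auto simp: less_SUP_iff)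
      then have "\<pi> \<in> C c" if "c \<in> I'" for c
        using Max_ge[OF I'(1) that] by (simp add: Cf)
      then show ?thesis using \<open>\<pi> \<in> K\<close> by auto
    qed
  qed
  then obtain \<pi>s where \<pi>s: "\<pi>s \<in> K" "\<forall>c. c < S \<longrightarrow> c \<le> f \<pi>s" by (auto simp: Cf)
  have "S \<le> f \<pi>s" by (rule dense_le) (use \<pi>s(2) in blast)
  moreover have "f \<pi> \<le> S" if "\<pi> \<in> policies T" for \<pi>
    using clipK[OF that] fclip[of \<pi>] unfolding S_def by (metis SUP_upper)
  ultimately show ?thesis using \<pi>s(1) unfolding K_def f_def by (auto intro: order_trans)
qed



lemma ln_gibbs:
  fixes q q' :: real
  assumes "q > 0" "q' > 0"
  shows "q * (ln q' - ln q) \<le> q' - q" and "q' \<noteq> q \<Longrightarrow> q * (ln q' - ln q) < q' - q"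
proof -
  have "ln q' - ln q \<le> (q' - q) / q" using ln_diff_le[OF assms(2,1)] .
  then show "q * (ln q' - ln q) \<le> q' - q" using assms by (simp add: field_simps)
next
  assume "q' \<noteq> q"
  then have "ln q' - ln q < (q' - q) / q" using ln_diff_less[OF assms(2,1)] by simp
  then show "q * (ln q' - ln q) < q' - q" using assms by (simp add: field_simps)
qed

lemma ereal_mult_not_inf:
  fixes x :: ereal
  assumes "x \<noteq> \<infinity>" "0 \<le> c"
  shows "ereal c * x \<noteq> \<infinity>"
  using assms by (cases x) auto



lemma ereal_sum_minf:
  fixes f :: "'x \<Rightarrow> ereal"
  assumes "finite A" "x0 \<in> A" "f x0 = -\<infinity>" "\<forall>x\<in>A. f x \<noteq> \<infinity>"
  shows "(\<Sum>x\<in>A. f x) = -\<infinity>"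
proof -
  have "(\<Sum>x\<in>A. f x) = f x0 + (\<Sum>x\<in>A - {x0}. f x)"
    using assms by (simp add: sum.remove)
  moreover have "(\<Sum>x\<in>A - {x0}. f x) \<noteq> \<infinity>"
    using assms by (simp add: sum_Pinfty)
  ultimately show ?thesis using assms(3) by simp
qed

theorem theorem3:
  fixes p1 :: "'s::finite \<Rightarrow> real"
    and p :: "'s \<Rightarrow> 'a::finite \<Rightarrow> 's \<Rightarrow> real"
    and T :: nat
    and R :: "('s \<Rightarrow> 'a \<Rightarrow> real) set"
  assumes "T \<ge> 1"
    and "\<forall>s. 0 \<le> p1 s" and "(\<Sum>s\<in>UNIV. p1 s) = 1"
    and "\<forall>s a s'. 0 \<le> p s a s'" and "\<forall>s a. (\<Sum>s'\<in>UNIV. p s a s') = 1"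
    and "R \<noteq> {}"
  shows "\<exists>r :: nat \<Rightarrow> 's \<Rightarrow> 'a \<Rightarrow> ereal.
           (\<forall>t s a. r t s a \<noteq> \<infinity>) \<and>
           argmax_set (policies T) (\<lambda>\<pi>. maxent_J p1 p T \<pi> r)
             \<subseteq> argmax_set (policies T) (robust_obj p1 p T R)"
proof -
  obtain \<pi>s where \<pi>s: "\<pi>s \<in> policies T"
    "\<forall>\<pi>\<in>policies T. robust_obj p1 p T R \<pi> \<le> robust_obj p1 p T R \<pi>s"
    using robust_max_exists by blast
  define r :: "nat \<Rightarrow> 's \<Rightarrow> 'a \<Rightarrow> ereal" where
    "r = (\<lambda>t s a. if 0 < \<pi>s t s a then ereal (ln (\<pi>s t s a)) else -\<infinity>)"
  define P where "P = traj_prob p1 p T"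
  define Lr where "Lr = (\<lambda>(\<pi>::nat \<Rightarrow> 's \<Rightarrow> 'a \<Rightarrow> real) (\<tau>::nat \<Rightarrow> 's \<times> 'a).
       (\<Sum>t\<in>{1..T}. ln (\<pi> t (fst (\<tau> t)) (snd (\<tau> t)))))"
  define B where "B = (\<lambda>(\<pi>::nat \<Rightarrow> 's \<Rightarrow> 'a \<Rightarrow> real) (\<tau>::nat \<Rightarrow> 's \<times> 'a).
       (\<Prod>t\<in>{1..T}. \<pi> t (fst (\<tau> t)) (snd (\<tau> t))))"
  define A where "A = (\<lambda>\<tau>::nat \<Rightarrow> 's \<times> 'a. p1 (fst (\<tau> 1)))"
  define C where "C = (\<lambda>\<tau>::nat \<Rightarrow> 's \<times> 'a. (\<Prod>t\<in>{2..T}. p (fst (\<tau> (t - 1))) (snd (\<tau> (t - 1))) (fst (\<tau> t))))"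
  have Pdef: "P \<pi> \<tau> = A \<tau> * B \<pi> \<tau> * C \<tau>" for \<pi> \<tau>
    unfolding P_def A_def B_def C_def traj_prob_def by simp
  have fin: "finite (traj T :: (nat \<Rightarrow> 's \<times> 'a) set)" by (rule finite_traj)
  have Pnn: "0 \<le> P \<pi> \<tau>" if "\<pi> \<in> policies T" for \<pi> \<tau>
    unfolding P_def using traj_prob_nonneg[OF assms(2) assms(4) that] .
  have Psum: "(\<Sum>\<tau>\<in>traj T. P \<pi> \<tau>) = 1" if "\<pi> \<in> policies T" for \<pi>
    unfolding P_def using traj_prob_sum[OF assms(3) assms(5) that assms(1) order_refl] .
  have Ann: "0 \<le> A \<tau>" for \<tau> unfolding A_def using assms(2) by simp
  have Cnn: "0 \<le> C \<tau>" for \<tau> unfolding C_def using assms(4) by (simp add: prod_nonneg)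
  have Bnn: "0 \<le> B \<pi> \<tau>" if "\<pi> \<in> policies T" for \<pi> \<tau>
    unfolding B_def using that unfolding policies_def by (intro prod_nonneg) auto
  have pos_parts: "A \<tau> > 0 \<and> B \<pi> \<tau> > 0 \<and> C \<tau> > 0" if "\<pi> \<in> policies T" "P \<pi> \<tau> > 0" for \<pi> \<tau>
  proof -
    have "A \<tau> \<noteq> 0" "B \<pi> \<tau> \<noteq> 0" "C \<tau> \<noteq> 0" using that(2) Pdef[of \<pi> \<tau>] by auto
    then show ?thesis using Ann[of \<tau>] Bnn[OF that(1), of \<tau>] Cnn[of \<tau>] by auto
  qed
  have pos_factors: "\<pi> t (fst (\<tau> t)) (snd (\<tau> t)) > 0"
    if "\<pi> \<in> policies T" "P \<pi> \<tau> > 0" "t \<in> {1..T}" for \<pi> \<tau> t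
  proof -
    have "B \<pi> \<tau> \<noteq> 0" using pos_parts[OF that(1,2)] by simp
    then have "\<pi> t (fst (\<tau> t)) (snd (\<tau> t)) \<noteq> 0" unfolding B_def using that(3) by auto
    moreover have "\<pi> t (fst (\<tau> t)) (snd (\<tau> t)) \<ge> 0" using that(1,3) unfolding policies_def by auto
    ultimately show ?thesis by simp
  qed
  define good where "good = (\<lambda>\<pi>. \<forall>\<tau>\<in>traj T. P \<pi> \<tau> > 0 \<longrightarrow>
        (\<forall>t\<in>{1..T}. 0 < \<pi>s t (fst (\<tau> t)) (snd (\<tau> t))))"
  have ret_fin: "exp_return p1 p T \<pi> r = ereal (\<Sum>\<tau>\<in>traj T. P \<pi> \<tau> * Lr \<pi>s \<tau>)"
    if "\<pi> \<in> policies T" "good \<pi>" for \<pi>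
  proof -
    have "ereal (P \<pi> \<tau>) * (\<Sum>t\<in>{1..T}. r t (fst (\<tau> t)) (snd (\<tau> t))) = ereal (P \<pi> \<tau> * Lr \<pi>s \<tau>)"
      if "\<tau> \<in> traj T" for \<tau>
    proof (cases "P \<pi> \<tau> > 0")
      case True
      then have "\<forall>t\<in>{1..T}. 0 < \<pi>s t (fst (\<tau> t)) (snd (\<tau> t))"
        using \<open>good \<pi>\<close> that unfolding good_def by blast
      then have "(\<Sum>t\<in>{1..T}. r t (fst (\<tau> t)) (snd (\<tau> t))) = (\<Sum>t\<in>{1..T}. ereal (ln (\<pi>s t (fst (\<tau> t)) (snd (\<tau> t)))))"
        unfolding r_def by (intro sum.cong) auto
      then show ?thesis unfolding Lr_def by simp
    next
      case False
      then have "P \<pi> \<tau> = 0" using Pnn[OF \<open>\<pi> \<in> policies T\<close>, of \<tau>] by simp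
      then show ?thesis by (simp add: zero_ereal_def[symmetric])
    qed
    then have "exp_return p1 p T \<pi> r = (\<Sum>\<tau>\<in>traj T. ereal (P \<pi> \<tau> * Lr \<pi>s \<tau>))"
      unfolding exp_return_def P_def by (intro sum.cong) auto
    then show ?thesis by simp
  qed
  have ret_minf: "exp_return p1 p T \<pi> r = -\<infinity>" if pol: "\<pi> \<in> policies T" and ng: "\<not> good \<pi>" for \<pi>
  proof -
    obtain \<tau>0 t0 where t0: "\<tau>0 \<in> traj T" "P \<pi> \<tau>0 > 0" "t0 \<in> {1..T}"
      "\<not> 0 < \<pi>s t0 (fst (\<tau>0 t0)) (snd (\<tau>0 t0))"
      using ng unfolding good_def by blast
    have rinf: "r t s a \<noteq> \<infinity>" for t s a unfolding r_def by auto
    have "(\<Sum>t\<in>{1..T}. r t (fst (\<tau>0 t)) (snd (\<tau>0 t))) = -\<infinity>"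
      by (rule ereal_sum_minf[OF _ t0(3)]) (use t0(4) rinf in \<open>auto simp: r_def\<close>)
    then have m: "ereal (P \<pi> \<tau>0) * (\<Sum>t\<in>{1..T}. r t (fst (\<tau>0 t)) (snd (\<tau>0 t))) = -\<infinity>"
      using t0(2) by simp
    show ?thesis unfolding exp_return_def
    proof (rule ereal_sum_minf[OF fin t0(1)])
      show "ereal (traj_prob p1 p T \<pi> \<tau>0) * (\<Sum>t\<in>{1..T}. r t (fst (\<tau>0 t)) (snd (\<tau>0 t))) = -\<infinity>"
        using m unfolding P_def .
      show "\<forall>x\<in>traj T. ereal (traj_prob p1 p T \<pi> x) * (\<Sum>t\<in>{1..T}. r t (fst (x t)) (snd (x t))) \<noteq> \<infinity>"
      proof
        fix x :: "nat \<Rightarrow> 's \<times> 'a" assume "x \<in> traj T"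
        have "(\<Sum>t\<in>{1..T}. r t (fst (x t)) (snd (x t))) \<noteq> \<infinity>"
          using rinf by (simp add: sum_Pinfty)
        then show "ereal (traj_prob p1 p T \<pi> x) * (\<Sum>t\<in>{1..T}. r t (fst (x t)) (snd (x t))) \<noteq> \<infinity>"
          using Pnn[OF pol, of x] unfolding P_def by (intro ereal_mult_not_inf)
      qed
    qed
  qed
  have ent: "causal_entropy p1 p T \<pi> = - (\<Sum>\<tau>\<in>traj T. P \<pi> \<tau> * Lr \<pi> \<tau>)" for \<pi>
    unfolding causal_entropy_def P_def Lr_def by (simp add: sum_negf sum_distrib_left)
  have Jgood: "maxent_J p1 p T \<pi> r = ereal (\<Sum>\<tau>\<in>traj T. P \<pi> \<tau> * (Lr \<pi>s \<tau> - Lr \<pi> \<tau>))"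
    if "\<pi> \<in> policies T" "good \<pi>" for \<pi>
    unfolding maxent_J_def ret_fin[OF that] ent
    by (simp add: right_diff_distrib sum_subtractf)
  have Jbad: "maxent_J p1 p T \<pi> r = -\<infinity>" if "\<pi> \<in> policies T" "\<not> good \<pi>" for \<pi>
    unfolding maxent_J_def ret_minf[OF that] by simp
  have good_s: "good \<pi>s"
    unfolding good_def using pos_factors[OF \<pi>s(1)] by blast
  have J_s: "maxent_J p1 p T \<pi>s r = 0"
    unfolding Jgood[OF \<pi>s(1) good_s] by (simp add: zero_ereal_def)
  have main: "robust_obj p1 p T R \<pi> = robust_obj p1 p T R \<pi>s"
    if "\<pi> \<in> policies T" "maxent_J p1 p T \<pi>s r \<le> maxent_J p1 p T \<pi> r" for \<pi>
  proof -
    have g: "good \<pi>"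
    proof (rule ccontr)
      assume "\<not> good \<pi>"
      then have "maxent_J p1 p T \<pi> r = -\<infinity>" by (rule Jbad[OF that(1)])
      with that(2) J_s show False by simp
    qed
    define S where "S = (\<Sum>\<tau>\<in>traj T. P \<pi> \<tau> * (Lr \<pi>s \<tau> - Lr \<pi> \<tau>))"
    have S0: "0 \<le> S" using that(2) unfolding J_s Jgood[OF that(1) g] S_def by simp
    have lnrel: "Lr \<pi>s \<tau> - Lr \<pi> \<tau> = ln (P \<pi>s \<tau>) - ln (P \<pi> \<tau>) \<and> P \<pi>s \<tau> > 0"
      if "\<tau> \<in> traj T" "P \<pi> \<tau> > 0" for \<tau>
    proof -
      have pp: "A \<tau> > 0" "B \<pi> \<tau> > 0" "C \<tau> > 0" using pos_parts[OF \<open>\<pi> \<in> policies T\<close> that(2)] by auto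
      have fs: "\<forall>t\<in>{1..T}. 0 < \<pi>s t (fst (\<tau> t)) (snd (\<tau> t))"
        using g that unfolding good_def by blast
      have Bs: "B \<pi>s \<tau> > 0" unfolding B_def using fs by (intro prod_pos) auto
      have fs': "\<pi>s t (fst (\<tau> t)) (snd (\<tau> t)) \<noteq> 0" if "t \<in> {1..T}" for t
        using fs that by (metis less_irrefl)
      have l1: "ln (B \<pi>s \<tau>) = Lr \<pi>s \<tau>" unfolding B_def Lr_def
        by (rule ln_prod) (simp, rule fs')
      have "\<forall>t\<in>{1..T}. 0 < \<pi> t (fst (\<tau> t)) (snd (\<tau> t))"
        using pos_factors[OF \<open>\<pi> \<in> policies T\<close> that(2)] by blast
      then have f2: "\<pi> t (fst (\<tau> t)) (snd (\<tau> t)) \<noteq> 0" if "t \<in> {1..T}" for t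
        using that by (metis less_irrefl)
      have l2: "ln (B \<pi> \<tau>) = Lr \<pi> \<tau>" unfolding B_def Lr_def
        by (rule ln_prod) (simp, rule f2)
      have "ln (P \<pi>s \<tau>) = ln (A \<tau>) + ln (B \<pi>s \<tau>) + ln (C \<tau>)"
        unfolding Pdef using pp Bs by (simp add: ln_mult_pos)
      moreover have "ln (P \<pi> \<tau>) = ln (A \<tau>) + ln (B \<pi> \<tau>) + ln (C \<tau>)"
        unfolding Pdef using pp by (simp add: ln_mult_pos)
      moreover have "P \<pi>s \<tau> > 0" unfolding Pdef using pp Bs by simp
      ultimately show ?thesis using l1 l2 by simp
    qed
    define d where "d = (\<lambda>\<tau>. P \<pi>s \<tau> - P \<pi> \<tau> - P \<pi> \<tau> * (Lr \<pi>s \<tau> - Lr \<pi> \<tau>))"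
    have dnn: "0 \<le> d \<tau>" if "\<tau> \<in> traj T" for \<tau>
    proof (cases "P \<pi> \<tau> > 0")
      case True
      with lnrel[OF that True] ln_gibbs(1)[OF True, of "P \<pi>s \<tau>"] show ?thesis
        unfolding d_def by simp
    next
      case False
      then have "P \<pi> \<tau> = 0" using Pnn[OF \<open>\<pi> \<in> policies T\<close>, of \<tau>] by simp
      then show ?thesis unfolding d_def using Pnn[OF \<pi>s(1), of \<tau>] by simp
    qed
    have "(\<Sum>\<tau>\<in>traj T. d \<tau>) = 1 - 1 - S"
      unfolding d_def S_def using Psum[OF \<pi>s(1)] Psum[OF \<open>\<pi> \<in> policies T\<close>]
      by (simp add: sum_subtractf)
    with S0 have "(\<Sum>\<tau>\<in>traj T. d \<tau>) \<le> 0" by simp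
    with dnn have "(\<Sum>\<tau>\<in>traj T. d \<tau>) = 0" by (meson order_antisym sum_nonneg)
    with dnn fin have d0: "\<forall>\<tau>\<in>traj T. d \<tau> = 0" by (simp add: sum_nonneg_eq_0_iff)
    have Peq: "P \<pi> \<tau> = P \<pi>s \<tau>" if "\<tau> \<in> traj T" for \<tau>
    proof (cases "P \<pi> \<tau> > 0")
      case True
      show ?thesis
      proof (rule ccontr)
        assume "P \<pi> \<tau> \<noteq> P \<pi>s \<tau>"
        with lnrel[OF that True] ln_gibbs(2)[OF True, of "P \<pi>s \<tau>"] have "0 < d \<tau>"
          unfolding d_def by simp
        with d0 that show False by simp
      qed
    next
      case False
      then have "P \<pi> \<tau> = 0" using Pnn[OF \<open>\<pi> \<in> policies T\<close>, of \<tau>] by simp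
      moreover have "d \<tau> = 0" using d0 that by blast
      ultimately show ?thesis unfolding d_def by simp
    qed
    have eq: "(\<Sum>\<tau>\<in>traj T. traj_prob p1 p T \<pi> \<tau> * c \<tau>) = (\<Sum>\<tau>\<in>traj T. traj_prob p1 p T \<pi>s \<tau> * c \<tau>)" for c
      by (rule sum.cong[OF refl]) (use Peq in \<open>simp add: P_def\<close>)
    show ?thesis
      unfolding robust_obj_def eq ..
  qed
  show ?thesis
  proof (intro exI[of _ r] conjI allI subsetI)
    fix t s a show "r t s a \<noteq> \<infinity>" unfolding r_def by auto
  next
    fix \<pi> assume "\<pi> \<in> argmax_set (policies T) (\<lambda>\<pi>. maxent_J p1 p T \<pi> r)"
    then have "\<pi> \<in> policies T" "maxent_J p1 p T \<pi>s r \<le> maxent_J p1 p T \<pi> r"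
      using \<pi>s(1) unfolding argmax_set_def by auto
    then have e: "robust_obj p1 p T R \<pi> = robust_obj p1 p T R \<pi>s" by (rule main)
    show "\<pi> \<in> argmax_set (policies T) (robust_obj p1 p T R)"
      unfolding argmax_set_def using \<open>\<pi> \<in> policies T\<close> \<pi>s(2) e by simp
  qed
qed


end
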